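(* Let $n$, $U=U_{n+1}$, the bases $E_{\mathcal M}$, $F^{\mathcal M}$, the elements $E_{\mathcal M_1\cdots\mathcal M_k}$, $F^{\mathcal N_1\cdots\mathcal N_k}$ and the projectors $\mathbb{P}_k$ be as in the context, and let $p\ge2$ be an integer. Suppose there are real numbers $a_k$ ($k=2,3,\dots,p$) such that $$\langle E_{\mathcal M_1\cdots\mathcal M_k}|F^{\mathcal N_1\cdots\mathcal N_k}\rangle=a_k(\mathbb{P}_k)_{\mathcal M_1\cdots\mathcal M_k}{}^{\mathcal N_1\cdots\mathcal N_k}$$ for all indices and all $k=2,\dots,p$, and put $a_1=1$. Then, for all indices (with summation over repeated indices), (i) $[\![E_{\mathcal M},F^{\mathcal N_1\cdots\mathcal N_p}]\!]=(-1)^p\frac{a_p}{a_{p-1}}(\mathbb{P}_p)_{\mathcal M\mathcal M_2\cdots\mathcal M_p}{}^{\mathcal N_1\cdots\mathcal N_p}F^{\mathcal M_2\cdots\mathcal M_p}$; (ii) $[\![E_{\mathcal M_2\cdots\mathcal M_p},F^{\mathcal N_1\cdots\mathcal N_p}]\!]=a_p(\mathbb{P}_p)_{\mathcal M_1\mathcal M_2\cdots\mathcal M_p}{}^{\mathcal N_1\cdots\mathcal N_p}F^{\mathcal M_1}$; (iii) $[\![E_{\mathcal M_1\cdots\mathcal M_p},F^{\mathcal N_1\cdots\mathcal N_p}]\!]=a_p(\mathbb{P}_p)_{\mathcal M_1\cdots\mathcal M_p}{}^{\mathcal K_1\cdots\mathcal K_p}\sum_{i=1}^p\delta_{\mathcal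 K_1}{}^{\mathcal N_1}\cdots\delta_{\mathcal K_{i-1}}{}^{\mathcal N_{i-1}}\{E_{\mathcal K_i},F^{\mathcal N_i}\}\delta_{\mathcal K_{i+1}}{}^{\mathcal N_{i+1}}\cdots\delta_{\mathcal K_p}{}^{\mathcal N_p}$. (For $p=2$, $F^{\mathcal M_2\cdots\mathcal M_p}$ means $F^{\mathcal M_2}$ and $E_{\mathcal M_2\cdots\mathcal M_p}$ means $E_{\mathcal M_2}$.)
   Context: Fix an integer $n$ with $4\le n\le 8$. $E_n$ denotes the split real Lie algebra with Dynkin diagram on nodes $1,\dots,n$, where nodes $1,\dots,n-1$ form a chain and node $n$ is joined to node $n-3$. Extend this diagram by a node $0$ joined to node $1$, and let $A=(A_{IJ})_{I,J=0,\dots,n}$ with $A_{00}=0$, $A_{ii}=2$ for $i\ge1$, $A_{IJ}=-1$ if $I\neq J$ are joined and $0$ otherwise. Let $\tilde U$ be the real Lie superalgebra generated by $e_I,f_I,h_I$ ($I=0,\dots,n$), all even except $e_0,f_0$ which are odd, subject to $[\![h_I,e_J]\!]=A_{IJ}e_J$, $[\![h_I,f_J]\!]=-A_{IJ}f_J$, $[\![e_I,f_J]\!]=\delta_{IJ}h_J$, $[\![h_I,h_J]\!]=0$, where $[\![x,y]\!]$ is the superbracket (written $\{x,y\}$ when both are odd, where it is symmetric, and $[x,y]$ otherwise). $U=U_{n+1}$ is the quotient of $\tilde U$ by its maximal ideal intersecting $\mathrm{span}\{h_I\}$ trivially (equivalently by the ideal generated by $(\mathrm{ad}\,e_i)^{1-A_{iJ}}(e_J)$,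 $(\mathrm{ad}\,f_i)^{1-A_{iJ}}(f_J)$, $i=1,\dots,n$, $J=0,\dots,n$). $U=\bigoplus_p U_p$ is $\mathbb{Z}$-graded with $e_0\in U_{-1}$, $f_0\in U_1$, all other generators in $U_0$; $U_p$ has parity $p\bmod 2$ and $[\![U_p,U_q]\!]\subseteq U_{p+q}$. The subalgebra generated by $e_i,f_i,h_i$ ($i\ge1$) is $E_n$, and each $U_p$ is an $E_n$-module. $U$ carries an invariant, supersymmetric bilinear form $\langle\cdot|\cdot\rangle$ with $\langle U_p|U_q\rangle=0$ unless $p+q=0$, $\langle h_I|h_J\rangle=A_{IJ}$, $\langle e_I|f_J\rangle=\delta_{IJ}$, $\langle e_I|e_J\rangle=\langle f_I|f_J\rangle=0$. Choose bases $\{E_{\mathcal M}\}$ of $U_{-1}$ and $\{F^{\mathcal M}\}$ of $U_1$ with $\langle E_{\mathcal M}|F^{\mathcal N}\rangle=\delta_{\mathcal M}{}^{\mathcal N}$. For $k\ge2$ set $E_{\mathcal M_1\cdots\mathcal M_k}=[\![E_{\mathcal M_1},[\![E_{\mathcal M_2},\ldots,[\![E_{\mathcal M_{k-1}},E_{\mathcal M_k}]\!]\cdots]\!]]\!]$ and $F^{\mathcal M_1\cdots\mathcal M_k}=[\![F^{\mathcal M_1},[\![F^{\mathcal M_2},\ldots,[\![F^{\mathcal M_{k-1}},F^{\mathcal M_k}]\!]\cdots]\!]]\!]$; these span $U_{-k}$ and $U_k$ respectively. For $k\ge2$, $\mathbb{P}_k$ is the projector onto the $E_n$-representation $U_{-k}$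 inside the $k$-fold tensor power of $U_{-1}$: an array $(\mathbb{P}_k)_{\mathcal M_1\cdots\mathcal M_k}{}^{\mathcal N_1\cdots\mathcal N_k}$, idempotent as a matrix, such that $E_{\mathcal M_1\cdots\mathcal M_k}=(\mathbb{P}_k)_{\mathcal M_1\cdots\mathcal M_k}{}^{\mathcal N_1\cdots\mathcal N_k}E_{\mathcal N_1\cdots\mathcal N_k}$ and $F^{\mathcal N_1\cdots\mathcal N_k}=(\mathbb{P}_k)_{\mathcal M_1\cdots\mathcal M_k}{}^{\mathcal N_1\cdots\mathcal N_k}F^{\mathcal M_1\cdots\mathcal M_k}$. Repeated indices are summed. *)

theory Defs
  imports "HOL-Analysis.Analysis"
begin

text \<open>Sign (-1)^(|x||y|) for homogeneous elements of parities a, b (True = odd).\<close>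
definition sgn2 :: "bool \<Rightarrow> bool \<Rightarrow> real" where
  "sgn2 a b = (if a \<and> b then -1 else 1)"

text \<open>A real Lie superalgebra on a real vector space: V False = even part, V True = odd part,
  br = superbracket.\<close>
definition lie_superalgebra :: "(bool \<Rightarrow> 'a::real_vector set) \<Rightarrow> ('a \<Rightarrow> 'a \<Rightarrow> 'a) \<Rightarrow> bool" where
  "lie_superalgebra V br \<longleftrightarrow>
     subspace (V False) \<and> subspace (V True) \<and> V False \<inter> V True = {0} \<and>
     (\<forall>x. \<exists>y z. y \<in> V False \<and> z \<in> V True \<and> x = y + z) \<and>
     (\<forall>x. linear (br x)) \<and> (\<forall>y. linear (\<lambda>x. br x y)) \<and>
     (\<forall>a b x y. x \<in> V a \<longrightarrow> y \<in> V b \<longrightarrow> br x y \<in> V (a \<noteq> b)) \<and>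
     (\<forall>a b x y. x \<in> V a \<longrightarrow> y \<in> V b \<longrightarrow> br x y = - (sgn2 a b *\<^sub>R br y x)) \<and>
     (\<forall>a b x y z. x \<in> V a \<longrightarrow> y \<in> V b \<longrightarrow>
        br x (br y z) = br (br x y) z + sgn2 a b *\<^sub>R br y (br x z))"

definition graded_ideal :: "(bool \<Rightarrow> 'a::real_vector set) \<Rightarrow> ('a \<Rightarrow> 'a \<Rightarrow> 'a) \<Rightarrow> 'a set \<Rightarrow> bool" where
  "graded_ideal V br I \<longleftrightarrow> subspace I \<and>
     (\<forall>x\<in>I. \<exists>y z. y \<in> I \<inter> V False \<and> z \<in> I \<inter> V True \<and> x = y + z) \<and>
     (\<forall>x. \<forall>i\<in>I. br x i \<in> I)"

text \<open>Dynkin diagram of E_n (nodes 1..n-1 a chain, node n joined to node n-3), extended by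
  node 0 joined to node 1.\<close>
definition joined :: "nat \<Rightarrow> nat \<Rightarrow> nat \<Rightarrow> bool" where
  "joined n I J \<longleftrightarrow>
     (I = 0 \<and> J = 1) \<or> (I = 1 \<and> J = 0) \<or>
     (1 \<le> I \<and> J = I + 1 \<and> J \<le> n - 1) \<or> (1 \<le> J \<and> I = J + 1 \<and> I \<le> n - 1) \<or>
     (I = n \<and> J = n - 3) \<or> (J = n \<and> I = n - 3)"

definition cartanA :: "nat \<Rightarrow> nat \<Rightarrow> nat \<Rightarrow> real" where
  "cartanA n I J = (if I = J then (if I = 0 then 0 else 2) else if joined n I J then -1 else 0)"

text \<open>Monomials (nested brackets of generators) together with their Z-degree:
  e_0 has degree -1, f_0 degree 1, all other generators degree 0.\<close>
inductive_set gmonos :: "nat \<Rightarrow> ('a \<Rightarrow> 'a \<Rightarrow> 'a) \<Rightarrow> (nat \<Rightarrow> 'a) \<Rightarrow> (nat \<Rightarrow> 'a) \<Rightarrow> (nat \<Rightarrow> 'a)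
    \<Rightarrow> (int \<times> 'a) set"
  for n br e f h where
  "(-1, e 0) \<in> gmonos n br e f h"
| "(1, f 0) \<in> gmonos n br e f h"
| "1 \<le> i \<Longrightarrow> i \<le> n \<Longrightarrow> (0, e i) \<in> gmonos n br e f h"
| "1 \<le> i \<Longrightarrow> i \<le> n \<Longrightarrow> (0, f i) \<in> gmonos n br e f h"
| "I \<le> n \<Longrightarrow> (0, h I) \<in> gmonos n br e f h"
| "(p, x) \<in> gmonos n br e f h \<Longrightarrow> (q, y) \<in> gmonos n br e f h \<Longrightarrow> (p + q, br x y) \<in> gmonos n br e f h"

definition grade :: "nat \<Rightarrow> ('a::real_vector \<Rightarrow> 'a \<Rightarrow> 'a) \<Rightarrow> (nat \<Rightarrow> 'a) \<Rightarrow> (nat \<Rightarrow> 'a) \<Rightarrow> (nat \<Rightarrow> 'a)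
    \<Rightarrow> int \<Rightarrow> 'a set" where
  "grade n br e f h p = span {x. (p, x) \<in> gmonos n br e f h}"

text \<open>These properties characterise the quotient of the free algebra
  U~ by its maximal ideal intersecting span{h_I} trivially, up to isomorphism.\<close>
definition is_U :: "nat \<Rightarrow> (bool \<Rightarrow> 'a::real_vector set) \<Rightarrow> ('a \<Rightarrow> 'a \<Rightarrow> 'a)
    \<Rightarrow> (nat \<Rightarrow> 'a) \<Rightarrow> (nat \<Rightarrow> 'a) \<Rightarrow> (nat \<Rightarrow> 'a) \<Rightarrow> bool" where
  "is_U n V br e f h \<longleftrightarrow>
     lie_superalgebra V br \<and>
     e 0 \<in> V True \<and> f 0 \<in> V True \<and>
     (\<forall>i. 1 \<le> i \<and> i \<le> n \<longrightarrow> e i \<in> V False \<and> f i \<in> V False) \<and>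
     (\<forall>I\<le>n. h I \<in> V False) \<and>
     (\<forall>I\<le>n. \<forall>J\<le>n.
        br (h I) (e J) = cartanA n I J *\<^sub>R e J \<and>
        br (h I) (f J) = - (cartanA n I J *\<^sub>R f J) \<and>
        br (e I) (f J) = (if I = J then h J else 0) \<and>
        br (h I) (h J) = 0) \<and>
     span {x. \<exists>p. (p, x) \<in> gmonos n br e f h} = UNIV \<and>
     (\<forall>c. (\<Sum>I\<le>n. c I *\<^sub>R h I) = 0 \<longrightarrow> (\<forall>I\<le>n. c I = 0)) \<and>
     (\<forall>J. graded_ideal V br J \<and> J \<inter> span (h ` {..n}) = {0} \<longrightarrow> J = {0})"

definition inv_form :: "nat \<Rightarrow> (bool \<Rightarrow> 'a::real_vector set) \<Rightarrow> ('a \<Rightarrow> 'a \<Rightarrow> 'a)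
    \<Rightarrow> (nat \<Rightarrow> 'a) \<Rightarrow> (nat \<Rightarrow> 'a) \<Rightarrow> (nat \<Rightarrow> 'a) \<Rightarrow> ('a \<Rightarrow> 'a \<Rightarrow> real) \<Rightarrow> bool" where
  "inv_form n V br e f h B \<longleftrightarrow>
     (\<forall>x. linear (B x)) \<and> (\<forall>y. linear (\<lambda>x. B x y)) \<and>
     (\<forall>x y z. B (br x y) z = B x (br y z)) \<and>
     (\<forall>a b x y. x \<in> V a \<longrightarrow> y \<in> V b \<longrightarrow> B x y = sgn2 a b * B y x) \<and>
     (\<forall>p q x y. p + q \<noteq> 0 \<longrightarrow> x \<in> grade n br e f h p \<longrightarrow> y \<in> grade n br e f h q \<longrightarrow> B x y = 0) \<and>
     (\<forall>I\<le>n. \<forall>J\<le>n.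
        B (h I) (h J) = cartanA n I J \<and>
        B (e I) (f J) = (if I = J then 1 else 0) \<and>
        B (e I) (e J) = 0 \<and> B (f I) (f J) = 0)"

definition dual_bases :: "nat \<Rightarrow> ('a::real_vector \<Rightarrow> 'a \<Rightarrow> 'a)
    \<Rightarrow> (nat \<Rightarrow> 'a) \<Rightarrow> (nat \<Rightarrow> 'a) \<Rightarrow> (nat \<Rightarrow> 'a) \<Rightarrow> ('a \<Rightarrow> 'a \<Rightarrow> real)
    \<Rightarrow> ('m::finite \<Rightarrow> 'a) \<Rightarrow> ('m \<Rightarrow> 'a) \<Rightarrow> bool" where
  "dual_bases n br e f h B E F \<longleftrightarrow>
     span (range E) = grade n br e f h (-1) \<and>
     (\<forall>c. (\<Sum>M\<in>UNIV. c M *\<^sub>R E M) = 0 \<longrightarrow> (\<forall>M. c M = 0)) \<and>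
     span (range F) = grade n br e f h 1 \<and>
     (\<forall>c. (\<Sum>M\<in>UNIV. c M *\<^sub>R F M) = 0 \<longrightarrow> (\<forall>M. c M = 0)) \<and>
     (\<forall>M N. B (E M) (F N) = (if M = N then 1 else 0))"

fun nest :: "('a::zero \<Rightarrow> 'a \<Rightarrow> 'a) \<Rightarrow> ('m \<Rightarrow> 'a) \<Rightarrow> 'm list \<Rightarrow> 'a" where
  "nest br E [] = 0"
| "nest br E [M] = E M"
| "nest br E (M # Ms) = br (E M) (nest br E Ms)"

definition tuples :: "nat \<Rightarrow> 'm list set" where
  "tuples k = {xs. length xs = k}"

text \<open>P is the projector P_k onto U_{-k} inside the k-fold tensor power of U_{-1}:
  an idempotent matrix (indexed by k-tuples) with
  E_{M1..Mk} = P_{M..}^{N..} E_{N..} and F^{N..} = P_{M..}^{N..} F^{M..}, whose kernel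
  (acting on coefficient vectors c, c |-> c P) is exactly the kernel of the map
  c |-> c_{M..} E_{M..} onto U_{-k} (i.e. the image of P is identified with U_{-k}).\<close>
definition is_projector :: "('a::real_vector \<Rightarrow> 'a \<Rightarrow> 'a) \<Rightarrow> ('m::finite \<Rightarrow> 'a) \<Rightarrow> ('m \<Rightarrow> 'a)
    \<Rightarrow> ('m list \<Rightarrow> 'm list \<Rightarrow> real) \<Rightarrow> nat \<Rightarrow> bool" where
  "is_projector br E F P k \<longleftrightarrow>
     (\<forall>Ms\<in>tuples k. \<forall>Ns\<in>tuples k. (\<Sum>Ks\<in>tuples k. P Ms Ks * P Ks Ns) = P Ms Ns) \<and>
     (\<forall>Ms\<in>tuples k. nest br E Ms = (\<Sum>Ns\<in>tuples k. P Ms Ns *\<^sub>R nest br E Ns)) \<and>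
     (\<forall>Ns\<in>tuples k. nest br F Ns = (\<Sum>Ms\<in>tuples k. P Ms Ns *\<^sub>R nest br F Ms)) \<and>
     (\<forall>c. (\<Sum>Ms\<in>tuples k. c Ms *\<^sub>R nest br E Ms) = 0 \<longrightarrow>
          (\<forall>Ns\<in>tuples k. (\<Sum>Ms\<in>tuples k. c Ms * P Ms Ns) = 0))"

end

theory Submission imports Defs begin
lemma span_bilin:
  fixes g :: "'a::real_vector \<Rightarrow> 'b::real_vector \<Rightarrow> 'c::real_vector"
  assumes l1: "\<And>x. linear (g x)" and l2: "\<And>y. linear (\<lambda>x. g x y)" and W: "subspace W"
    and gen: "\<And>a b. a \<in> S \<Longrightarrow> b \<in> T \<Longrightarrow> g a b \<in> W"
    and x: "x \<in> span S" and y: "y \<in> span T"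
  shows "g x y \<in> W"
proof -
  have A: "g a y \<in> W" if "a \<in> S" for a
  proof -
    have "span T \<subseteq> g a -` W"
      by (rule span_minimal) (use gen that in auto, rule linear_subspace_vimage[OF l1 W])
    with y show ?thesis by auto
  qed
  have "span S \<subseteq> (\<lambda>x. g x y) -` W"
    by (rule span_minimal) (use A in auto, rule linear_subspace_vimage[OF l2 W])
  with x show ?thesis by auto
qed

lemma lin_span:
  fixes g :: "'a::real_vector \<Rightarrow> 'c::real_vector"
  assumes l: "linear g" and W: "subspace W" and gen: "\<And>a. a \<in> S \<Longrightarrow> g a \<in> W"
    and y: "y \<in> span S"
  shows "g y \<in> W"
proof -
  have "span S \<subseteq> g -` W"
    by (rule span_minimal) (use gen in auto, rule linear_subspace_vimage[OF l W])
  with y show ?thesis by auto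
qed

lemma subspace_zero: "subspace {0::'a::real_vector}"
  by (simp add: subspace_def)

lemma span_rep:
  fixes X :: "'i \<Rightarrow> 'a::real_vector"
  assumes "finite S" and "x \<in> span (X ` S)"
  shows "\<exists>c. x = (\<Sum>i\<in>S. c i *\<^sub>R X i)"
proof -
  let ?W = "{x. \<exists>c. x = (\<Sum>i\<in>S. c i *\<^sub>R X i)}"
  have sub: "subspace ?W"
    unfolding subspace_def
  proof (intro conjI ballI allI)
    show "0 \<in> ?W" by (rule CollectI, rule exI[of _ "\<lambda>_. 0"]) simp
    fix x y assume "x \<in> ?W" "y \<in> ?W"
    then obtain c d where "x = (\<Sum>i\<in>S. c i *\<^sub>R X i)" "y = (\<Sum>i\<in>S. d i *\<^sub>R X i)" by auto
    then show "x + y \<in> ?W"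
      by (intro CollectI exI[of _ "\<lambda>i. c i + d i"]) (simp add: scaleR_add_left sum.distrib)
  next
    fix r x assume "x \<in> ?W"
    then obtain c where "x = (\<Sum>i\<in>S. c i *\<^sub>R X i)" by auto
    then show "r *\<^sub>R x \<in> ?W"
      by (intro CollectI exI[of _ "\<lambda>i. r * c i"]) (simp add: scaleR_sum_right)
  qed
  have "span (X ` S) \<subseteq> ?W"
  proof (rule span_minimal[OF _ sub], safe)
    fix j assume "j \<in> S"
    show "\<exists>c. X j = (\<Sum>i\<in>S. c i *\<^sub>R X i)"
      by (rule exI[of _ "\<lambda>i. if i = j then 1 else 0"])
         (simp add: if_distrib[of "\<lambda>t. t *\<^sub>R _"] \<open>j \<in> S\<close> assms(1) cong: if_cong)
  qed
  with assms(2) show ?thesis by auto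
qed

lemma finite_tuples: "finite (tuples k :: ('m::finite) list set)"
  unfolding tuples_def using finite_lists_length_eq[of "UNIV::'m set" k] by simp

lemma nest_Cons: "Ls \<noteq> [] \<Longrightarrow> nest br X (M # Ls) = br (X M) (nest br X Ls)"
  by (cases Ls) auto

lemma tuples_Cons: "Ls \<in> tuples k \<Longrightarrow> M # Ls \<in> tuples (Suc k)"
  by (simp add: tuples_def)
lemma sel:
  fixes g :: "'m::finite list \<Rightarrow> real"
  assumes Ns: "Ns \<in> tuples p" and i: "i < p"
  shows "(\<Sum>Ks\<in>tuples p. if (\<forall>j<p. j \<noteq> i \<longrightarrow> Ks ! j = Ns ! j) then g Ks else 0) = (\<Sum>K\<in>UNIV. g (Ns[i := K]))"
proof -
  have lenN: "length Ns = p" using Ns by (simp add: tuples_def)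
  have set: "{Ks \<in> tuples p. \<forall>j<p. j \<noteq> i \<longrightarrow> Ks ! j = Ns ! j} = range (\<lambda>K. Ns[i := K])"
  proof (intro equalityI subsetI)
    fix Ks assume "Ks \<in> {Ks \<in> tuples p. \<forall>j<p. j \<noteq> i \<longrightarrow> Ks ! j = Ns ! j}"
    then have K: "length Ks = p" "\<forall>j<p. j \<noteq> i \<longrightarrow> Ks ! j = Ns ! j" by (auto simp: tuples_def)
    have "Ks = Ns[i := Ks ! i]"
      by (rule nth_equalityI) (use K lenN i in \<open>auto simp: nth_list_update\<close>)
    then show "Ks \<in> range (\<lambda>K. Ns[i := K])" by blast
  next
    fix Ks assume "Ks \<in> range (\<lambda>K. Ns[i := K])"
    then obtain K where "Ks = Ns[i := K]" by auto
    then show "Ks \<in> {Ks \<in> tuples p. \<forall>j<p. j \<noteq> i \<longrightarrow> Ks ! j = Ns ! j}"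
      using lenN by (auto simp: tuples_def)
  qed
  have inj: "inj (\<lambda>K. Ns[i := K])"
  proof (rule injI)
    fix K K' assume "Ns[i := K] = Ns[i := K']"
    then have "Ns[i := K] ! i = Ns[i := K'] ! i" by simp
    then show "K = K'" using lenN i by simp
  qed
  have "(\<Sum>Ks\<in>tuples p. if (\<forall>j<p. j \<noteq> i \<longrightarrow> Ks ! j = Ns ! j) then g Ks else 0)
      = sum g {Ks \<in> tuples p. \<forall>j<p. j \<noteq> i \<longrightarrow> Ks ! j = Ns ! j}"
    by (rule sum.inter_filter[symmetric, OF finite_tuples])
  also have "\<dots> = sum g (range (\<lambda>K. Ns[i := K]))" unfolding set ..
  also have "\<dots> = (\<Sum>K\<in>UNIV. g (Ns[i := K]))" by (simp add: sum.reindex[OF inj])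
  finally show ?thesis .
qed
lemma cartan_nonsing:
  assumes "4 \<le> n" "n \<le> 8" and h: "\<forall>J\<le>n. (\<Sum>I\<le>n. c I * cartanA n J I) = 0"
  shows "\<forall>I\<le>n. c I = (0::real)"
proof -
  have "n = 4 \<or> n = 5 \<or> n = 6 \<or> n = 7 \<or> n = 8" using assms by auto
  then show ?thesis
  proof (elim disjE)
    assume [simp]: "n = 4"
    have s: "{..4::nat} = {0,1,2,3,4}" by auto
    have e0: "-c 1 = 0"
    proof -
      have "(\<Sum>I\<in>{0,1,2,3,4}. c I * cartanA 4 0 I) = 0" using h s by auto
      then show ?thesis by (simp add: cartanA_def joined_def)
    qed
    have e1: "-c 0 + 2*c 1 - c 2 - c 4 = 0"
    proof -
      have "(\<Sum>I\<in>{0,1,2,3,4}. c I * cartanA 4 1 I) = 0" using h s by auto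
      then show ?thesis by (simp add: cartanA_def joined_def)
    qed
    have e2: "-c 1 + 2*c 2 - c 3 = 0"
    proof -
      have "(\<Sum>I\<in>{0,1,2,3,4}. c I * cartanA 4 2 I) = 0" using h s by auto
      then show ?thesis by (simp add: cartanA_def joined_def)
    qed
    have e3: "-c 2 + 2*c 3 = 0"
    proof -
      have "(\<Sum>I\<in>{0,1,2,3,4}. c I * cartanA 4 3 I) = 0" using h s by auto
      then show ?thesis by (simp add: cartanA_def joined_def)
    qed
    have e4: "-c 1 + 2*c 4 = 0"
    proof -
      have "(\<Sum>I\<in>{0,1,2,3,4}. c I * cartanA 4 4 I) = 0" using h s by auto
      then show ?thesis by (simp add: cartanA_def joined_def)
    qed
    have "c 0 = 0 \<and> c 1 = 0 \<and> c 2 = 0 \<and> c 3 = 0 \<and> c 4 = 0" using e0 e1 e2 e3 e4 by linarith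
    then have "\<forall>I\<in>{..n}. c I = 0" using s by simp
    then show ?thesis by simp
  next
    assume [simp]: "n = 5"
    have s: "{..5::nat} = {0,1,2,3,4,5}" by auto
    have e0: "-c 1 = 0"
    proof -
      have "(\<Sum>I\<in>{0,1,2,3,4,5}. c I * cartanA 5 0 I) = 0" using h s by auto
      then show ?thesis by (simp add: cartanA_def joined_def)
    qed
    have e1: "-c 0 + 2*c 1 - c 2 = 0"
    proof -
      have "(\<Sum>I\<in>{0,1,2,3,4,5}. c I * cartanA 5 1 I) = 0" using h s by auto
      then show ?thesis by (simp add: cartanA_def joined_def)
    qed
    have e2: "-c 1 + 2*c 2 - c 3 - c 5 = 0"
    proof -
      have "(\<Sum>I\<in>{0,1,2,3,4,5}. c I * cartanA 5 2 I) = 0" using h s by auto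
      then show ?thesis by (simp add: cartanA_def joined_def)
    qed
    have e3: "-c 2 + 2*c 3 - c 4 = 0"
    proof -
      have "(\<Sum>I\<in>{0,1,2,3,4,5}. c I * cartanA 5 3 I) = 0" using h s by auto
      then show ?thesis by (simp add: cartanA_def joined_def)
    qed
    have e4: "-c 3 + 2*c 4 = 0"
    proof -
      have "(\<Sum>I\<in>{0,1,2,3,4,5}. c I * cartanA 5 4 I) = 0" using h s by auto
      then show ?thesis by (simp add: cartanA_def joined_def)
    qed
    have e5: "-c 2 + 2*c 5 = 0"
    proof -
      have "(\<Sum>I\<in>{0,1,2,3,4,5}. c I * cartanA 5 5 I) = 0" using h s by auto
      then show ?thesis by (simp add: cartanA_def joined_def)
    qed
    have "c 0 = 0 \<and> c 1 = 0 \<and> c 2 = 0 \<and> c 3 = 0 \<and> c 4 = 0 \<and> c 5 = 0" using e0 e1 e2 e3 e4 e5 by linarith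
    then have "\<forall>I\<in>{..n}. c I = 0" using s by simp
    then show ?thesis by simp
  next
    assume [simp]: "n = 6"
    have s: "{..6::nat} = {0,1,2,3,4,5,6}" by auto
    have e0: "-c 1 = 0"
    proof -
      have "(\<Sum>I\<in>{0,1,2,3,4,5,6}. c I * cartanA 6 0 I) = 0" using h s by auto
      then show ?thesis by (simp add: cartanA_def joined_def)
    qed
    have e1: "-c 0 + 2*c 1 - c 2 = 0"
    proof -
      have "(\<Sum>I\<in>{0,1,2,3,4,5,6}. c I * cartanA 6 1 I) = 0" using h s by auto
      then show ?thesis by (simp add: cartanA_def joined_def)
    qed
    have e2: "-c 1 + 2*c 2 - c 3 = 0"
    proof -
      have "(\<Sum>I\<in>{0,1,2,3,4,5,6}. c I * cartanA 6 2 I) = 0" using h s by auto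
      then show ?thesis by (simp add: cartanA_def joined_def)
    qed
    have e3: "-c 2 + 2*c 3 - c 4 - c 6 = 0"
    proof -
      have "(\<Sum>I\<in>{0,1,2,3,4,5,6}. c I * cartanA 6 3 I) = 0" using h s by auto
      then show ?thesis by (simp add: cartanA_def joined_def)
    qed
    have e4: "-c 3 + 2*c 4 - c 5 = 0"
    proof -
      have "(\<Sum>I\<in>{0,1,2,3,4,5,6}. c I * cartanA 6 4 I) = 0" using h s by auto
      then show ?thesis by (simp add: cartanA_def joined_def)
    qed
    have e5: "-c 4 + 2*c 5 = 0"
    proof -
      have "(\<Sum>I\<in>{0,1,2,3,4,5,6}. c I * cartanA 6 5 I) = 0" using h s by auto
      then show ?thesis by (simp add: cartanA_def joined_def)
    qed
    have e6: "-c 3 + 2*c 6 = 0"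
    proof -
      have "(\<Sum>I\<in>{0,1,2,3,4,5,6}. c I * cartanA 6 6 I) = 0" using h s by auto
      then show ?thesis by (simp add: cartanA_def joined_def)
    qed
    have "c 0 = 0 \<and> c 1 = 0 \<and> c 2 = 0 \<and> c 3 = 0 \<and> c 4 = 0 \<and> c 5 = 0 \<and> c 6 = 0" using e0 e1 e2 e3 e4 e5 e6 by linarith
    then have "\<forall>I\<in>{..n}. c I = 0" using s by simp
    then show ?thesis by simp
  next
    assume [simp]: "n = 7"
    have s: "{..7::nat} = {0,1,2,3,4,5,6,7}" by auto
    have e0: "-c 1 = 0"
    proof -
      have "(\<Sum>I\<in>{0,1,2,3,4,5,6,7}. c I * cartanA 7 0 I) = 0" using h s by auto
      then show ?thesis by (simp add: cartanA_def joined_def)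
    qed
    have e1: "-c 0 + 2*c 1 - c 2 = 0"
    proof -
      have "(\<Sum>I\<in>{0,1,2,3,4,5,6,7}. c I * cartanA 7 1 I) = 0" using h s by auto
      then show ?thesis by (simp add: cartanA_def joined_def)
    qed
    have e2: "-c 1 + 2*c 2 - c 3 = 0"
    proof -
      have "(\<Sum>I\<in>{0,1,2,3,4,5,6,7}. c I * cartanA 7 2 I) = 0" using h s by auto
      then show ?thesis by (simp add: cartanA_def joined_def)
    qed
    have e3: "-c 2 + 2*c 3 - c 4 = 0"
    proof -
      have "(\<Sum>I\<in>{0,1,2,3,4,5,6,7}. c I * cartanA 7 3 I) = 0" using h s by auto
      then show ?thesis by (simp add: cartanA_def joined_def)
    qed
    have e4: "-c 3 + 2*c 4 - c 5 - c 7 = 0"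
    proof -
      have "(\<Sum>I\<in>{0,1,2,3,4,5,6,7}. c I * cartanA 7 4 I) = 0" using h s by auto
      then show ?thesis by (simp add: cartanA_def joined_def)
    qed
    have e5: "-c 4 + 2*c 5 - c 6 = 0"
    proof -
      have "(\<Sum>I\<in>{0,1,2,3,4,5,6,7}. c I * cartanA 7 5 I) = 0" using h s by auto
      then show ?thesis by (simp add: cartanA_def joined_def)
    qed
    have e6: "-c 5 + 2*c 6 = 0"
    proof -
      have "(\<Sum>I\<in>{0,1,2,3,4,5,6,7}. c I * cartanA 7 6 I) = 0" using h s by auto
      then show ?thesis by (simp add: cartanA_def joined_def)
    qed
    have e7: "-c 4 + 2*c 7 = 0"
    proof -
      have "(\<Sum>I\<in>{0,1,2,3,4,5,6,7}. c I * cartanA 7 7 I) = 0" using h s by auto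
      then show ?thesis by (simp add: cartanA_def joined_def)
    qed
    have "c 0 = 0 \<and> c 1 = 0 \<and> c 2 = 0 \<and> c 3 = 0 \<and> c 4 = 0 \<and> c 5 = 0 \<and> c 6 = 0 \<and> c 7 = 0" using e0 e1 e2 e3 e4 e5 e6 e7 by linarith
    then have "\<forall>I\<in>{..n}. c I = 0" using s by simp
    then show ?thesis by simp
  next
    assume [simp]: "n = 8"
    have s: "{..8::nat} = {0,1,2,3,4,5,6,7,8}" by auto
    have e0: "-c 1 = 0"
    proof -
      have "(\<Sum>I\<in>{0,1,2,3,4,5,6,7,8}. c I * cartanA 8 0 I) = 0" using h s by auto
      then show ?thesis by (simp add: cartanA_def joined_def)
    qed
    have e1: "-c 0 + 2*c 1 - c 2 = 0"
    proof -
      have "(\<Sum>I\<in>{0,1,2,3,4,5,6,7,8}. c I * cartanA 8 1 I) = 0" using h s by auto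
      then show ?thesis by (simp add: cartanA_def joined_def)
    qed
    have e2: "-c 1 + 2*c 2 - c 3 = 0"
    proof -
      have "(\<Sum>I\<in>{0,1,2,3,4,5,6,7,8}. c I * cartanA 8 2 I) = 0" using h s by auto
      then show ?thesis by (simp add: cartanA_def joined_def)
    qed
    have e3: "-c 2 + 2*c 3 - c 4 = 0"
    proof -
      have "(\<Sum>I\<in>{0,1,2,3,4,5,6,7,8}. c I * cartanA 8 3 I) = 0" using h s by auto
      then show ?thesis by (simp add: cartanA_def joined_def)
    qed
    have e4: "-c 3 + 2*c 4 - c 5 = 0"
    proof -
      have "(\<Sum>I\<in>{0,1,2,3,4,5,6,7,8}. c I * cartanA 8 4 I) = 0" using h s by auto
      then show ?thesis by (simp add: cartanA_def joined_def)
    qed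
    have e5: "-c 4 + 2*c 5 - c 6 - c 8 = 0"
    proof -
      have "(\<Sum>I\<in>{0,1,2,3,4,5,6,7,8}. c I * cartanA 8 5 I) = 0" using h s by auto
      then show ?thesis by (simp add: cartanA_def joined_def)
    qed
    have e6: "-c 5 + 2*c 6 - c 7 = 0"
    proof -
      have "(\<Sum>I\<in>{0,1,2,3,4,5,6,7,8}. c I * cartanA 8 6 I) = 0" using h s by auto
      then show ?thesis by (simp add: cartanA_def joined_def)
    qed
    have e7: "-c 6 + 2*c 7 = 0"
    proof -
      have "(\<Sum>I\<in>{0,1,2,3,4,5,6,7,8}. c I * cartanA 8 7 I) = 0" using h s by auto
      then show ?thesis by (simp add: cartanA_def joined_def)
    qed
    have e8: "-c 5 + 2*c 8 = 0"
    proof -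
      have "(\<Sum>I\<in>{0,1,2,3,4,5,6,7,8}. c I * cartanA 8 8 I) = 0" using h s by auto
      then show ?thesis by (simp add: cartanA_def joined_def)
    qed
    have "c 0 = 0 \<and> c 1 = 0 \<and> c 2 = 0 \<and> c 3 = 0 \<and> c 4 = 0 \<and> c 5 = 0 \<and> c 6 = 0 \<and> c 7 = 0 \<and> c 8 = 0" using e0 e1 e2 e3 e4 e5 e6 e7 e8 by linarith
    then have "\<forall>I\<in>{..n}. c I = 0" using s by simp
    then show ?thesis by simp
  qed
qed
locale Uset =
  fixes n :: nat and V :: "bool \<Rightarrow> 'a::real_vector set" and br :: "'a \<Rightarrow> 'a \<Rightarrow> 'a"
    and e f h :: "nat \<Rightarrow> 'a" and B :: "'a \<Rightarrow> 'a \<Rightarrow> real"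
    and E F :: "'m::finite \<Rightarrow> 'a"
  assumes n4: "4 \<le> n" and n8: "n \<le> 8"
    and U: "is_U n V br e f h" and IF: "inv_form n V br e f h B"
    and DB: "dual_bases n br e f h B E F"
begin

abbreviation "G d \<equiv> grade n br e f h d"

lemma LS: "lie_superalgebra V br" using U unfolding is_U_def by (elim conjE) assumption
lemma LSc1: "subspace (V False)"
  using LS unfolding lie_superalgebra_def by (elim conjE) assumption
lemma LSc2: "subspace (V True)"
  using LS unfolding lie_superalgebra_def by (elim conjE) assumption
lemma LSc3: "V False \<inter> V True = {0}"
  using LS unfolding lie_superalgebra_def by (elim conjE) assumption
lemma LSc4: "\<forall>x. \<exists>y z. y \<in> V False \<and> z \<in> V True \<and> x = y + z"
  using LS unfolding lie_superalgebra_def by (elim conjE) assumption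
lemma LSc5: "\<forall>x. linear (br x)"
  using LS unfolding lie_superalgebra_def by (elim conjE) assumption
lemma LSc6: "\<forall>y. linear (\<lambda>x. br x y)"
  using LS unfolding lie_superalgebra_def by (elim conjE) assumption
lemma LSc7: "\<forall>a b x y. x \<in> V a \<longrightarrow> y \<in> V b \<longrightarrow> br x y \<in> V (a \<noteq> b)"
  using LS unfolding lie_superalgebra_def by (elim conjE) assumption
lemma LSc8: "\<forall>a b x y. x \<in> V a \<longrightarrow> y \<in> V b \<longrightarrow> br x y = - (sgn2 a b *\<^sub>R br y x)"
  using LS unfolding lie_superalgebra_def by (elim conjE) assumption
lemma LSc9: "\<forall>a b x y z. x \<in> V a \<longrightarrow> y \<in> V b \<longrightarrow> br x (br y z) = br (br x y) z + sgn2 a b *\<^sub>R br y (br x z)"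
  using LS unfolding lie_superalgebra_def by (elim conjE) assumption
lemma subV: "subspace (V b)" using LSc1 LSc2 by (cases b) auto
lemma VFT: "x \<in> V False \<Longrightarrow> x \<in> V True \<Longrightarrow> x = 0" using LSc3 by blast
lemma dec: "\<exists>y z. y \<in> V False \<and> z \<in> V True \<and> x = y + z" using LSc4 by blast
lemma lin1: "linear (br x)" using LSc5 by blast
lemma lin2: "linear (\<lambda>x. br x y)" using LSc6 by blast
lemma parb: "x \<in> V a \<Longrightarrow> y \<in> V b \<Longrightarrow> br x y \<in> V (a \<noteq> b)" using LSc7 by blast
lemma anti: "x \<in> V a \<Longrightarrow> y \<in> V b \<Longrightarrow> br x y = - (sgn2 a b *\<^sub>R br y x)" using LSc8 by blast
lemma jac: "x \<in> V a \<Longrightarrow> y \<in> V b \<Longrightarrow> br x (br y z) = br (br x y) z + sgn2 a b *\<^sub>R br y (br x z)"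
  using LSc9 by blast
lemma IFc1: "\<forall>x. linear (B x)"
  using IF unfolding inv_form_def by (elim conjE) assumption
lemma IFc2: "\<forall>y. linear (\<lambda>x. B x y)"
  using IF unfolding inv_form_def by (elim conjE) assumption
lemma IFc3: "\<forall>x y z. B (br x y) z = B x (br y z)"
  using IF unfolding inv_form_def by (elim conjE) assumption
lemma IFc4: "\<forall>a b x y. x \<in> V a \<longrightarrow> y \<in> V b \<longrightarrow> B x y = sgn2 a b * B y x"
  using IF unfolding inv_form_def by (elim conjE) assumption
lemma IFc5: "\<forall>p q x y. p + q \<noteq> 0 \<longrightarrow> x \<in> grade n br e f h p \<longrightarrow> y \<in> grade n br e f h q \<longrightarrow> B x y = 0"
  using IF unfolding inv_form_def by (elim conjE) assumption
lemma IFc6: "\<forall>I\<le>n. \<forall>J\<le>n. B (h I) (h J) = cartanA n I J \<and> B (e I) (f J) = (if I = J then 1 else 0) \<and> B (e I) (e J) = 0 \<and> B (f I) (f J) = 0"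
  using IF unfolding inv_form_def by (elim conjE) assumption
lemma linB1: "linear (B x)" using IFc1 by blast
lemma linB2: "linear (\<lambda>x. B x y)" using IFc2 by blast
lemma invB: "B (br x y) z = B x (br y z)" using IFc3 by blast
lemma symB: "x \<in> V a \<Longrightarrow> y \<in> V b \<Longrightarrow> B x y = sgn2 a b * B y x" using IFc4 by blast
lemma gradB: "p + q \<noteq> 0 \<Longrightarrow> x \<in> G p \<Longrightarrow> y \<in> G q \<Longrightarrow> B x y = 0" using IFc5 by blast
lemma Bhh: "I \<le> n \<Longrightarrow> J \<le> n \<Longrightarrow> B (h I) (h J) = cartanA n I J" using IFc6 by blast
lemma DBc1: "span (range E) = grade n br e f h (-1)"
  using DB unfolding dual_bases_def by (elim conjE) assumption
lemma DBc2: "span (range F) = grade n br e f h 1"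
  using DB unfolding dual_bases_def by (elim conjE) assumption
lemma DBc3: "\<forall>M N. B (E M) (F N) = (if M = N then 1 else 0)"
  using DB unfolding dual_bases_def by (elim conjE) assumption
lemma GE: "G (-1) = span (range E)" using DBc1 by simp
lemma GF: "G 1 = span (range F)" using DBc2 by simp
lemma BEF: "B (E M) (F N) = (if M = N then 1 else 0)" using DBc3 by blast
lemma Uc1: "e 0 \<in> V True"
  using U unfolding is_U_def by (elim conjE) assumption
lemma Uc2: "f 0 \<in> V True"
  using U unfolding is_U_def by (elim conjE) assumption
lemma Uc3: "\<forall>i. 1 \<le> i \<and> i \<le> n \<longrightarrow> e i \<in> V False \<and> f i \<in> V False"
  using U unfolding is_U_def by (elim conjE) assumption
lemma Uc4: "\<forall>I\<le>n. h I \<in> V False"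
  using U unfolding is_U_def by (elim conjE) assumption
lemma Uc5: "span {x. \<exists>p. (p, x) \<in> gmonos n br e f h} = UNIV"
  using U unfolding is_U_def by (elim conjE) assumption
lemma Uc6: "\<forall>J. graded_ideal V br J \<and> J \<inter> span (h ` {..n}) = {0} \<longrightarrow> J = {0}"
  using U unfolding is_U_def by (elim conjE) assumption

lemma mon_span: "span {x. \<exists>p. (p, x) \<in> gmonos n br e f h} = UNIV" by (rule Uc5)

lemma gen_par: "e 0 \<in> V True" "f 0 \<in> V True"
  "1 \<le> i \<Longrightarrow> i \<le> n \<Longrightarrow> e i \<in> V False"
  "1 \<le> i \<Longrightarrow> i \<le> n \<Longrightarrow> f i \<in> V False"
  "I \<le> n \<Longrightarrow> h I \<in> V False"
  using Uc1 Uc2 Uc3 Uc4 by blast+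

lemma mon_par: "(d, x) \<in> gmonos n br e f h \<Longrightarrow> x \<in> V (odd d)"
proof (induction rule: gmonos.induct)
  case (6 p x q y)
  have "br x y \<in> V (odd p \<noteq> odd q)" by (rule parb[OF 6(3) 6(4)])
  moreover have "odd (p + q) = (odd p \<noteq> odd q)" by auto
  ultimately show ?case by simp
qed (auto intro: gen_par)

lemma G_par: "x \<in> G d \<Longrightarrow> x \<in> V (odd d)"
proof -
  have "G d \<subseteq> V (odd d)" unfolding grade_def by (rule span_minimal[OF _ subV]) (auto intro: mon_par)
  then show "x \<in> G d \<Longrightarrow> x \<in> V (odd d)" by blast
qed

lemma mon_G: "(d, x) \<in> gmonos n br e f h \<Longrightarrow> x \<in> G d"
  unfolding grade_def by (rule span_base) simp

lemma GR: "x \<in> G p \<Longrightarrow> y \<in> G q \<Longrightarrow> br x y \<in> G (p + q)"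
  unfolding grade_def
  by (rule span_bilin[OF lin1 lin2 subspace_span]) (auto intro!: span_base gmonos.intros(6))

lemma G_sub: "subspace (G d)" unfolding grade_def by simp

lemma E_G: "E M \<in> G (-1)" using GE by (simp add: span_base)
lemma F_G: "F M \<in> G 1" using GF by (simp add: span_base)
lemma E_odd: "E M \<in> V True" using G_par[OF E_G] by simp
lemma F_odd: "F M \<in> V True" using G_par[OF F_G] by simp

lemma expand:
  assumes "x \<in> span (range F)"
  shows "x = (\<Sum>K\<in>UNIV. B (E K) x *\<^sub>R F K)"
proof -
  obtain c where c: "x = (\<Sum>i\<in>UNIV. c i *\<^sub>R F i)" using span_rep[of UNIV x F] assms by auto
  have "B (E K) x = c K" for K
  proof -
    have "B (E K) x = (\<Sum>i\<in>UNIV. c i * B (E K) (F i))"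
      unfolding c by (simp add: linear_sum[OF linB1] linear_scale[OF linB1])
    also have "\<dots> = (\<Sum>i\<in>UNIV. if K = i then c i else 0)" by (rule sum.cong) (auto simp: BEF)
    also have "\<dots> = c K" by simp
    finally show ?thesis .
  qed
  then show ?thesis using c by simp
qed

lemma zero1: "x \<in> G 1 \<Longrightarrow> (\<And>L. B (E L) x = 0) \<Longrightarrow> x = 0"
  using expand[of x] GF by simp

lemma tuples1: "nest br X ` tuples 1 = range X"
proof -
  have t: "tuples 1 = (\<lambda>M. [M]) ` UNIV" unfolding tuples_def
    by (auto simp: length_Suc_conv)
  show ?thesis unfolding t by (simp add: image_image)
qed

lemma nest_G:
  assumes X: "span (range X) = G s" and "Ls \<noteq> []"
  shows "nest br X Ls \<in> G (s * int (length Ls))"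
  using assms(2)
proof (induction Ls)
  case Nil then show ?case by simp
next
  case (Cons M Ls)
  have XM: "X M \<in> G s" using X by (metis UNIV_I image_eqI span_base)
  show ?case
  proof (cases "Ls = []")
    case True then show ?thesis using XM by simp
  next
    case False
    have "br (X M) (nest br X Ls) \<in> G (s + s * int (length Ls))"
      by (rule GR[OF XM Cons.IH[OF False]])
    moreover have "s + s * int (length Ls) = s * int (length (M # Ls))" by (simp add: algebra_simps)
    ultimately show ?thesis by (simp add: nest_Cons[OF False])
  qed
qed

lemma X_odd:
  assumes X: "span (range X) = G s" and s: "s = 1 \<or> s = -1"
  shows "X M \<in> V True"
proof -
  have "X M \<in> G s" using X by (metis UNIV_I image_eqI span_base)
  from G_par[OF this] s show ?thesis by auto
qed

lemma pre_c1:
  assumes x: "x \<in> span (range X)" and "Ls \<noteq> []"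
  shows "br x (nest br X Ls) \<in> span (nest br X ` tuples (Suc (length Ls)))"
proof (rule lin_span[OF lin2 subspace_span _ x])
  fix a assume "a \<in> range X"
  then obtain M where "a = X M" by auto
  then have "br a (nest br X Ls) = nest br X (M # Ls)" by (simp add: nest_Cons[OF assms(2)])
  moreover have "M # Ls \<in> tuples (Suc (length Ls))" by (simp add: tuples_def)
  ultimately show "br a (nest br X Ls) \<in> span (nest br X ` tuples (Suc (length Ls)))"
    by (auto intro: span_base)
qed

lemma pre_c2:
  assumes y: "y \<in> span (nest br X ` tuples k)" and "k \<noteq> 0"
  shows "br (X M) y \<in> span (nest br X ` tuples (Suc k))"
proof (rule lin_span[OF lin1 subspace_span _ y])
  fix a assume "a \<in> nest br X ` tuples k"
  then obtain Ls where Ls: "Ls \<in> tuples k" "a = nest br X Ls" by auto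
  then have "Ls \<noteq> []" using assms(2) by (auto simp: tuples_def)
  then have "br (X M) a = nest br X (M # Ls)" using Ls by (simp add: nest_Cons)
  moreover have "M # Ls \<in> tuples (Suc k)" using Ls by (simp add: tuples_def)
  ultimately show "br (X M) a \<in> span (nest br X ` tuples (Suc k))" by (auto intro: span_base)
qed

lemma c_lem:
  assumes X: "span (range X) = G s" and s: "s = 1 \<or> s = -1" and u: "u \<in> G 0" and "Ls \<noteq> []"
  shows "br u (nest br X Ls) \<in> span (nest br X ` tuples (length Ls))"
  using assms(4)
proof (induction Ls)
  case Nil then show ?case by simp
next
  case (Cons M Ls)
  have uX: "br u (X M) \<in> span (range X)"
  proof -
    have "X M \<in> G s" using X by (metis UNIV_I image_eqI span_base)
    from GR[OF u this] X show ?thesis by simp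
  qed
  show ?case
  proof (cases "Ls = []")
    case True then show ?thesis using uX tuples1[of X] by simp
  next
    case False
    have uF: "u \<in> V False" using G_par[OF u] by simp
    have XT: "X M \<in> V True" by (rule X_odd[OF X s])
    have eq: "br u (nest br X (M # Ls)) = br (br u (X M)) (nest br X Ls) + br (X M) (br u (nest br X Ls))"
      using jac[OF uF XT, of "nest br X Ls"] by (simp add: sgn2_def nest_Cons[OF False])
    have 1: "br (br u (X M)) (nest br X Ls) \<in> span (nest br X ` tuples (length (M # Ls)))"
      using pre_c1[OF uX False] by simp
    have 2: "br (X M) (br u (nest br X Ls)) \<in> span (nest br X ` tuples (length (M # Ls)))"
      using pre_c2[OF Cons.IH[OF False]] False by simp
    show ?thesis unfolding eq by (rule span_add[OF 1 2])
  qed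
qed

lemma d_lem:
  assumes X: "span (range X) = G s" and s: "s = 1 \<or> s = -1"
    and Y: "span (range Y) = G (-s)" and "Ls \<noteq> []"
  shows "br (X M) (nest br Y Ls) \<in> (if length Ls = 1 then G 0 else span (nest br Y ` tuples (length Ls - 1)))"
  using assms(4)
proof (induction Ls)
  case Nil then show ?case by simp
next
  case (Cons N Ls)
  have XM: "X M \<in> G s" using X by (metis UNIV_I image_eqI span_base)
  have YN: "Y N \<in> G (-s)" using Y by (metis UNIV_I image_eqI span_base)
  have g: "br (X M) (Y N) \<in> G 0" using GR[OF XM YN] by simp
  have s': "-s = 1 \<or> -s = -1" using s by auto
  show ?case
  proof (cases "Ls = []")
    case True then show ?thesis using g by simp
  next
    case False
    have XT: "X M \<in> V True" by (rule X_odd[OF X s])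
    have YT: "Y N \<in> V True" by (rule X_odd[OF Y s'])
    have eq: "br (X M) (nest br Y (N # Ls)) = br (br (X M) (Y N)) (nest br Y Ls) - br (Y N) (br (X M) (nest br Y Ls))"
      using jac[OF XT YT, of "nest br Y Ls"] by (simp add: sgn2_def nest_Cons[OF False])
    have 1: "br (br (X M) (Y N)) (nest br Y Ls) \<in> span (nest br Y ` tuples (length (N # Ls) - 1))"
      using c_lem[OF Y s' g False] by simp
    have 2: "br (Y N) (br (X M) (nest br Y Ls)) \<in> span (nest br Y ` tuples (length (N # Ls) - 1))"
    proof (cases "length Ls = 1")
      case True
      then have "br (X M) (nest br Y Ls) \<in> G 0" using Cons.IH[OF False] by simp
      from GR[OF YN this] Y have "br (Y N) (br (X M) (nest br Y Ls)) \<in> span (range Y)" by simp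
      then show ?thesis using True tuples1[of Y] by simp
    next
      case F1: False
      then have "br (X M) (nest br Y Ls) \<in> span (nest br Y ` tuples (length Ls - 1))"
        using Cons.IH[OF False] by simp
      have ne: "length Ls - 1 \<noteq> 0" using F1 False by (cases Ls) auto
      have r: "br (Y N) (br (X M) (nest br Y Ls)) \<in> span (nest br Y ` tuples (Suc (length Ls - 1)))"
        by (rule pre_c2[OF \<open>br (X M) (nest br Y Ls) \<in> span (nest br Y ` tuples (length Ls - 1))\<close> ne])
      have eq: "length (N # Ls) - 1 = Suc (length Ls - 1)" using False by (cases Ls) auto
      show ?thesis unfolding eq by (rule r)
    qed
    have "br (X M) (nest br Y (N # Ls)) \<in> span (nest br Y ` tuples (length (N # Ls) - 1))"
      unfolding eq by (rule span_diff[OF 1 2])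
    then show ?thesis using False by simp
  qed
qed

lemma sE: "span (range E) = G (-1)" using GE by simp
lemma sF: "span (range F) = G (- (-1))" using GF by simp
lemma sF1: "span (range F) = G 1" using GF by simp

definition "Tgen = {nest br E Ls |Ls. Ls \<noteq> []} \<union> G 0 \<union> {nest br F Ls |Ls. Ls \<noteq> []}"

lemma SE_T: "k \<noteq> 0 \<Longrightarrow> span (nest br E ` tuples k) \<subseteq> span Tgen"
  by (rule span_mono) (auto simp: Tgen_def tuples_def)
lemma SF_T: "k \<noteq> 0 \<Longrightarrow> span (nest br F ` tuples k) \<subseteq> span Tgen"
  by (rule span_mono) (auto simp: Tgen_def tuples_def)
lemma G0_T: "G 0 \<subseteq> span Tgen"
  using span_superset[of Tgen] by (auto simp: Tgen_def)
lemma rE_T: "span (range E) \<subseteq> span Tgen" using SE_T[of 1] tuples1[of E] by simp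
lemma rF_T: "span (range F) \<subseteq> span Tgen" using SF_T[of 1] tuples1[of F] by simp

lemma T_G0: assumes "x \<in> G 0" "t \<in> span Tgen" shows "br x t \<in> span Tgen"
proof (rule lin_span[OF lin1 subspace_span _ assms(2)])
  fix a assume "a \<in> Tgen"
  then consider (e) Ls where "Ls \<noteq> []" "a = nest br E Ls" | (z) "a \<in> G 0"
    | (f) Ls where "Ls \<noteq> []" "a = nest br F Ls" unfolding Tgen_def by blast
  then show "br x a \<in> span Tgen"
  proof cases
    case e then show ?thesis using c_lem[OF sE _ assms(1), of Ls] SE_T[of "length Ls"] by auto
  next
    case z then show ?thesis using GR[OF assms(1) z] G0_T by auto
  next
    case f then show ?thesis using c_lem[OF sF1 _ assms(1), of Ls] SF_T[of "length Ls"] by auto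
  qed
qed

lemma T_E: assumes "x \<in> span (range E)" "t \<in> span Tgen" shows "br x t \<in> span Tgen"
proof (rule lin_span[OF lin1 subspace_span _ assms(2)])
  fix a assume "a \<in> Tgen"
  then consider (e) Ls where "Ls \<noteq> []" "a = nest br E Ls" | (z) "a \<in> G 0"
    | (f) Ls where "Ls \<noteq> []" "a = nest br F Ls" unfolding Tgen_def by blast
  then show "br x a \<in> span Tgen"
  proof cases
    case e then show ?thesis using pre_c1[OF assms(1), of Ls] SE_T[of "Suc (length Ls)"] by auto
  next
    case z
    have "x \<in> G (-1)" using assms(1) GE by simp
    from GR[OF this z] show ?thesis using rE_T GE by auto
  next
    case f
    show ?thesis
    proof (rule lin_span[OF lin2 subspace_span _ assms(1)])
      fix b assume "b \<in> range E"
      then obtain M where "b = E M" by auto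
      have d: "br (E M) (nest br F Ls) \<in> (if length Ls = 1 then G 0 else span (nest br F ` tuples (length Ls - 1)))"
        by (rule d_lem[OF sE _ sF f(1)]) simp
      have "br (E M) (nest br F Ls) \<in> span Tgen"
      proof (cases "length Ls = 1")
        case True then show ?thesis using d G0_T by auto
      next
        case False
        then have "length Ls - 1 \<noteq> 0" using f(1) by (cases Ls) auto
        then show ?thesis using d False SF_T[of "length Ls - 1"] by auto
      qed
      then show "br b a \<in> span Tgen" using \<open>b = E M\<close> f(2) by simp
    qed
  qed
qed

lemma T_F: assumes "x \<in> span (range F)" "t \<in> span Tgen" shows "br x t \<in> span Tgen"
proof (rule lin_span[OF lin1 subspace_span _ assms(2)])
  fix a assume "a \<in> Tgen"
  then consider (e) Ls where "Ls \<noteq> []" "a = nest br E Ls" | (z) "a \<in> G 0"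
    | (f) Ls where "Ls \<noteq> []" "a = nest br F Ls" unfolding Tgen_def by blast
  then show "br x a \<in> span Tgen"
  proof cases
    case f then show ?thesis using pre_c1[OF assms(1), of Ls] SF_T[of "Suc (length Ls)"] by auto
  next
    case z
    have "x \<in> G 1" using assms(1) GF by simp
    from GR[OF this z] show ?thesis using rF_T GF by auto
  next
    case e
    show ?thesis
    proof (rule lin_span[OF lin2 subspace_span _ assms(1)])
      fix b assume "b \<in> range F"
      then obtain M where "b = F M" by auto
      have d: "br (F M) (nest br E Ls) \<in> (if length Ls = 1 then G 0 else span (nest br E ` tuples (length Ls - 1)))"
        by (rule d_lem[OF sF1 _ sE e(1)]) simp
      have "br (F M) (nest br E Ls) \<in> span Tgen"
      proof (cases "length Ls = 1")
        case True then show ?thesis using d G0_T by auto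
      next
        case False
        then have "length Ls - 1 \<noteq> 0" using e(1) by (cases Ls) auto
        then show ?thesis using d False SE_T[of "length Ls - 1"] by auto
      qed
      then show "br b a \<in> span Tgen" using \<open>b = F M\<close> e(2) by simp
    qed
  qed
qed
lemma T_cl: "x \<in> G 0 \<or> x \<in> span (range E) \<or> x \<in> span (range F) \<Longrightarrow> t \<in> span Tgen \<Longrightarrow> br x t \<in> span Tgen"
  using T_G0 T_E T_F by blast

lemma mon_T: "(d, m) \<in> gmonos n br e f h \<Longrightarrow> m \<in> span Tgen \<and> (\<forall>t\<in>span Tgen. br m t \<in> span Tgen)"
proof (induction rule: gmonos.induct)
  case 1
  have "e 0 \<in> span (range E)" using mon_G[OF gmonos.intros(1)] GE by simp
  then show ?case using rE_T T_cl by blast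
next
  case 2
  have "f 0 \<in> span (range F)" using mon_G[OF gmonos.intros(2)] GF by simp
  then show ?case using rF_T T_cl by blast
next
  case (3 i)
  have "e i \<in> G 0" using mon_G[OF gmonos.intros(3)[OF 3]] by simp
  then show ?case using G0_T T_cl by blast
next
  case (4 i)
  have "f i \<in> G 0" using mon_G[OF gmonos.intros(4)[OF 4]] by simp
  then show ?case using G0_T T_cl by blast
next
  case (5 I)
  have "h I \<in> G 0" using mon_G[OF gmonos.intros(5)[OF 5]] by simp
  then show ?case using G0_T T_cl by blast
next
  case (6 p x q y)
  have xp: "x \<in> V (odd p)" by (rule mon_par[OF 6(1)])
  have yq: "y \<in> V (odd q)" by (rule mon_par[OF 6(2)])
  have "br x y \<in> span Tgen" using 6 by blast
  moreover have "br (br x y) t \<in> span Tgen" if t: "t \<in> span Tgen" for t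
  proof -
    have eq: "br (br x y) t = br x (br y t) - sgn2 (odd p) (odd q) *\<^sub>R br y (br x t)"
      using jac[OF xp yq, of t] by simp
    show ?thesis unfolding eq using 6 t by (intro span_diff span_scale) blast+
  qed
  ultimately show ?case by blast
qed

lemma all_T: "x \<in> span Tgen"
proof -
  have "span {x. \<exists>p. (p, x) \<in> gmonos n br e f h} \<subseteq> span Tgen"
    by (rule span_minimal) (use mon_T in auto)
  then show ?thesis using mon_span by auto
qed

definition "PS b = span {m. \<exists>d. (d, m) \<in> gmonos n br e f h \<and> odd d = b}"

lemma PS_V: "PS b \<subseteq> V b"
  unfolding PS_def by (rule span_minimal[OF _ subV]) (auto dest: mon_par)

lemma V_PS: assumes x: "x \<in> V b" shows "x \<in> PS b"
proof -
  have "{x. \<exists>p. (p, x) \<in> gmonos n br e f h} =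
      {m. \<exists>d. (d, m) \<in> gmonos n br e f h \<and> odd d = b} \<union> {m. \<exists>d. (d, m) \<in> gmonos n br e f h \<and> odd d = (\<not> b)}"
    by auto
  then have "x \<in> span ({m. \<exists>d. (d, m) \<in> gmonos n br e f h \<and> odd d = b} \<union> {m. \<exists>d. (d, m) \<in> gmonos n br e f h \<and> odd d = (\<not> b)})"
    using mon_span by (metis UNIV_I)
  then obtain y z where yz: "x = y + z" "y \<in> PS b" "z \<in> PS (\<not> b)" unfolding span_Un PS_def by blast
  have "z \<in> V (\<not> b)" using yz(3) PS_V by blast
  moreover have "z \<in> V b"
  proof -
    have "y \<in> V b" using yz(2) PS_V by blast
    then have "x - y \<in> V b" using x subV by (simp add: subspace_diff)
    then show ?thesis using yz(1) by simp
  qed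
  ultimately have "z = 0" using VFT by (cases b) auto
  then show ?thesis using yz by simp
qed

lemma orth: assumes "x \<in> V a" "y \<in> V b" "a \<noteq> b" shows "B x y = 0"
proof -
  have "B x y \<in> {0}"
  proof (rule span_bilin[OF linB1 linB2 subspace_zero])
    show "x \<in> span {m. \<exists>d. (d, m) \<in> gmonos n br e f h \<and> odd d = a}" using V_PS[OF assms(1)] PS_def by simp
    show "y \<in> span {m. \<exists>d. (d, m) \<in> gmonos n br e f h \<and> odd d = b}" using V_PS[OF assms(2)] PS_def by simp
    fix u v assume "u \<in> {m. \<exists>d. (d, m) \<in> gmonos n br e f h \<and> odd d = a}"
      "v \<in> {m. \<exists>d. (d, m) \<in> gmonos n br e f h \<and> odd d = b}"
    then obtain d q where "(d, u) \<in> gmonos n br e f h" "odd d = a" "(q, v) \<in> gmonos n br e f h" "odd q = b" by auto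
    moreover have "d + q \<noteq> 0"
    proof
      assume "d + q = 0" then have "q = - d" by simp
      then have "odd q = odd d" by simp
      then show False using \<open>odd d = a\<close> \<open>odd q = b\<close> assms(3) by simp
    qed
    ultimately show "B u v \<in> {0}" using gradB mon_G by blast
  qed
  then show ?thesis by simp
qed

lemma ND: assumes "\<And>y. B y x = 0" shows "x = 0"
proof -
  define R where "R = {x. \<forall>y. B y x = 0}"
  have subR: "subspace R" unfolding subspace_def R_def
    by (simp add: linear_0[OF linB1] linear_add[OF linB1] linear_scale[OF linB1])
  have gi: "graded_ideal V br R"
    unfolding graded_ideal_def
  proof (intro conjI ballI allI)
    show "subspace R" by (rule subR)
  next
    fix x assume xR: "x \<in> R"
    obtain y z where yz: "y \<in> V False" "z \<in> V True" "x = y + z" using dec by blast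
    have yR: "y \<in> R" unfolding R_def
    proof (intro CollectI allI)
      fix w
      obtain w0 w1 where w: "w0 \<in> V False" "w1 \<in> V True" "w = w0 + w1" using dec by blast
      have "B w y = B w0 y + B w1 y" using w(3) linear_add[OF linB2] by simp
      moreover have "B w1 y = 0" using orth[OF w(2) yz(1)] by simp
      moreover have "B w0 y = 0"
      proof -
        have "B w0 x = B w0 y + B w0 z" using yz(3) linear_add[OF linB1] by simp
        moreover have "B w0 x = 0" using xR R_def by simp
        moreover have "B w0 z = 0" using orth[OF w(1) yz(2)] by simp
        ultimately show ?thesis by simp
      qed
      ultimately show "B w y = 0" by simp
    qed
    have zR: "z \<in> R"
    proof -
      have "x - y \<in> R" using subR xR yR by (simp add: subspace_diff)
      then show ?thesis using yz(3) by simp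
    qed
    show "\<exists>y z. y \<in> R \<inter> V False \<and> z \<in> R \<inter> V True \<and> x = y + z" using yR zR yz by blast
  next
    fix x i assume "i \<in> R"
    then show "br x i \<in> R" unfolding R_def by (simp add: invB[symmetric])
  qed
  have cap: "R \<inter> span (h ` {..n}) = {0}"
  proof
    show "{0} \<subseteq> R \<inter> span (h ` {..n})" using subR by (simp add: subspace_0 span_zero)
  next
    show "R \<inter> span (h ` {..n}) \<subseteq> {0}"
    proof
      fix x assume x: "x \<in> R \<inter> span (h ` {..n})"
      then obtain c where c: "x = (\<Sum>I\<le>n. c I *\<^sub>R h I)" using span_rep[of "{..n}" x h] by auto
      have "\<forall>J\<le>n. (\<Sum>I\<le>n. c I * cartanA n J I) = 0"
      proof (intro allI impI)
        fix J assume J: "J \<le> n"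
        have "B (h J) x = (\<Sum>I\<le>n. c I * B (h J) (h I))"
          unfolding c by (simp add: linear_sum[OF linB1] linear_scale[OF linB1])
        also have "\<dots> = (\<Sum>I\<le>n. c I * cartanA n J I)" using J by (intro sum.cong) (auto simp: Bhh)
        finally show "(\<Sum>I\<le>n. c I * cartanA n J I) = 0" using x R_def by simp
      qed
      then have "\<forall>I\<le>n. c I = 0" by (rule cartan_nonsing[OF n4 n8])
      then show "x \<in> {0}" using c by simp
    qed
  qed
  have "R = {0}" using Uc6 gi cap by blast
  moreover have "x \<in> R" using assms R_def by simp
  ultimately show ?thesis by simp
qed

lemma zeroE:
  assumes j: "j \<noteq> 0" and w: "w \<in> G (int j)" and hyp: "\<And>Ls. Ls \<in> tuples j \<Longrightarrow> B (nest br E Ls) w = 0"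
  shows "w = 0"
proof (rule ND)
  fix y
  have "B y w \<in> {0}"
  proof (rule lin_span[OF linB2 subspace_zero _ all_T])
    fix a assume "a \<in> Tgen"
    then consider (e) Ls where "Ls \<noteq> []" "a = nest br E Ls" | (z) "a \<in> G 0"
      | (f) Ls where "Ls \<noteq> []" "a = nest br F Ls" unfolding Tgen_def by blast
    then show "B a w \<in> {0}"
    proof cases
      case e
      show ?thesis
      proof (cases "length Ls = j")
        case True then show ?thesis using hyp[of Ls] e by (simp add: tuples_def)
      next
        case False
        have "a \<in> G (-1 * int (length Ls))" using nest_G[OF sE e(1)] e(2) by simp
        moreover have "-1 * int (length Ls) + int j \<noteq> 0" using False by simp
        ultimately show ?thesis using gradB w by blast
      qed
    next
      case z
      have "0 + int j \<noteq> 0" using j by simp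
      then show ?thesis using gradB z w by blast
    next
      case f
      have "a \<in> G (1 * int (length Ls))" using nest_G[OF sF1 f(1)] f(2) by simp
      moreover have "1 * int (length Ls) + int j \<noteq> 0" using j by simp
      ultimately show ?thesis using gradB w by blast
    qed
  qed
  then show "B y w = 0" by simp
qed

lemma zero0:
  assumes w: "w \<in> G 0" and hyp: "\<And>u. u \<in> G 0 \<Longrightarrow> B u w = 0"
  shows "w = 0"
proof (rule ND)
  fix y
  have "y \<in> span {x. \<exists>p. (p, x) \<in> gmonos n br e f h}" using mon_span by simp
  have "B y w \<in> {0}"
  proof (rule lin_span[OF linB2 subspace_zero _ \<open>y \<in> _\<close>])
    fix a assume "a \<in> {x. \<exists>p. (p, x) \<in> gmonos n br e f h}"
    then obtain p where p: "(p, a) \<in> gmonos n br e f h" by auto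
    show "B a w \<in> {0}"
    proof (cases "p = 0")
      case True then show ?thesis using hyp mon_G[OF p] by simp
    next
      case False then show ?thesis using gradB[of p 0] mon_G[OF p] w by simp
    qed
  qed
  then show "B y w = 0" by simp
qed
lemma nest_F_G: "Ls \<noteq> [] \<Longrightarrow> nest br F Ls \<in> G (int (length Ls))"
  using nest_G[OF sF1] by simp
lemma nest_E_G: "Ls \<noteq> [] \<Longrightarrow> nest br E Ls \<in> G (- int (length Ls))"
  using nest_G[OF sE] by simp
lemma nest_F_par: "Ls \<noteq> [] \<Longrightarrow> nest br F Ls \<in> V (odd (length Ls))"
  using G_par[OF nest_F_G] by simp
lemma nest_E_par: "Ls \<noteq> [] \<Longrightarrow> nest br E Ls \<in> V (odd (length Ls))"
  using G_par[OF nest_E_G] by simp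

lemma deriv:
  assumes u: "u \<in> G 0" and "Ns \<noteq> []"
  shows "br u (nest br F Ns) =
     (\<Sum>j<length Ns. \<Sum>K\<in>UNIV. B (E K) (br u (F (Ns ! j))) *\<^sub>R nest br F (Ns[j := K]))"
  using assms(2)
proof (induction Ns)
  case Nil then show ?case by simp
next
  case (Cons N Ns)
  have uF: "br u (F N) \<in> span (range F)" using GR[OF u F_G[of N]] GF by simp
  have exp: "br u (F N) = (\<Sum>K\<in>UNIV. B (E K) (br u (F N)) *\<^sub>R F K)" by (rule expand[OF uF])
  show ?case
  proof (cases "Ns = []")
    case True
    then show ?thesis using exp by simp
  next
    case False
    have uFalse: "u \<in> V False" using G_par[OF u] by simp
    have eq: "br u (nest br F (N # Ns)) = br (br u (F N)) (nest br F Ns) + br (F N) (br u (nest br F Ns))"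
      using jac[OF uFalse F_odd[of N], of "nest br F Ns"] by (simp add: sgn2_def nest_Cons[OF False])
    have t1: "br (br u (F N)) (nest br F Ns) =
        (\<Sum>K\<in>UNIV. B (E K) (br u (F ((N # Ns) ! 0))) *\<^sub>R nest br F ((N # Ns)[0 := K]))"
      by (subst exp) (simp add: linear_sum[OF lin2] linear_scale[OF lin2] nest_Cons[OF False])
    have t2: "br (F N) (br u (nest br F Ns)) =
        (\<Sum>j<length Ns. \<Sum>K\<in>UNIV. B (E K) (br u (F ((N # Ns) ! Suc j))) *\<^sub>R nest br F ((N # Ns)[Suc j := K]))"
    proof -
      have "br (F N) (br u (nest br F Ns)) =
         (\<Sum>j<length Ns. \<Sum>K\<in>UNIV. B (E K) (br u (F (Ns ! j))) *\<^sub>R br (F N) (nest br F (Ns[j := K])))"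
        by (simp add: Cons.IH[OF False] linear_sum[OF lin1] linear_scale[OF lin1])
      also have "\<dots> = (\<Sum>j<length Ns. \<Sum>K\<in>UNIV. B (E K) (br u (F ((N # Ns) ! Suc j))) *\<^sub>R nest br F ((N # Ns)[Suc j := K]))"
      proof (intro sum.cong refl)
        fix j K assume "j \<in> {..<length Ns}"
        have "Ns[j := K] \<noteq> []" using False by simp
        then show "B (E K) (br u (F (Ns ! j))) *\<^sub>R br (F N) (nest br F (Ns[j := K])) =
            B (E K) (br u (F ((N # Ns) ! Suc j))) *\<^sub>R nest br F ((N # Ns)[Suc j := K])"
          by (simp add: nest_Cons)
      qed
      finally show ?thesis .
    qed
    show ?thesis unfolding eq t1 t2
      by (simp only: length_Cons sum.lessThan_Suc_shift)
  qed
qed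

lemma sgn_p: "1 \<le> q \<Longrightarrow> - sgn2 (odd q) True = (-1::real) ^ Suc q"
  by (cases "even q") (auto simp: sgn2_def)

lemma part_ii:
  assumes p2: "2 \<le> p"
    and H: "\<And>Ls Ns. Ls \<in> tuples p \<Longrightarrow> Ns \<in> tuples p \<Longrightarrow> B (nest br E Ls) (nest br F Ns) = ap * Pp Ls Ns"
    and Ms: "Ms \<in> tuples (p - 1)" and Ns: "Ns \<in> tuples p"
  shows "br (nest br E Ms) (nest br F Ns) = ap *\<^sub>R (\<Sum>M\<in>UNIV. Pp (M # Ms) Ns *\<^sub>R F M)"
proof -
  have Msne: "Ms \<noteq> []" using Ms p2 by (auto simp: tuples_def)
  have Nsne: "Ns \<noteq> []" using Ns p2 by (auto simp: tuples_def)
  let ?L = "br (nest br E Ms) (nest br F Ns)"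
  let ?R = "ap *\<^sub>R (\<Sum>M\<in>UNIV. Pp (M # Ms) Ns *\<^sub>R F M)"
  have LG: "?L \<in> G 1"
  proof -
    have "?L \<in> G (- int (length Ms) + int (length Ns))" by (rule GR[OF nest_E_G[OF Msne] nest_F_G[OF Nsne]])
    moreover have "- int (length Ms) + int (length Ns) = 1" using Ms Ns p2 by (simp add: tuples_def)
    ultimately show ?thesis by simp
  qed
  have RG: "?R \<in> G 1" unfolding GF by (intro span_scale span_sum) (auto intro: span_base)
  have "?L - ?R = 0"
  proof (rule zero1)
    show "?L - ?R \<in> G 1" using LG RG G_sub by (simp add: subspace_diff)
    fix L
    have "B (E L) ?L = B (nest br E (L # Ms)) (nest br F Ns)"
      by (simp add: invB[symmetric] nest_Cons[OF Msne])
    also have "\<dots> = ap * Pp (L # Ms) Ns" using H[of "L # Ms" Ns] Ms Ns p2 by (simp add: tuples_def)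
    finally have 1: "B (E L) ?L = ap * Pp (L # Ms) Ns" .
    have "B (E L) ?R = ap * (\<Sum>M\<in>UNIV. Pp (M # Ms) Ns * B (E L) (F M))"
      by (simp add: linear_sum[OF linB1] linear_scale[OF linB1])
    also have "\<dots> = ap * (\<Sum>M\<in>UNIV. if L = M then Pp (M # Ms) Ns else 0)"
      by (intro arg_cong[where f = "\<lambda>t. ap * t"] sum.cong) (auto simp: BEF)
    also have "\<dots> = ap * Pp (L # Ms) Ns" by simp
    finally have 2: "B (E L) ?R = ap * Pp (L # Ms) Ns" .
    show "B (E L) (?L - ?R) = 0" using 1 2 by (simp add: linear_diff[OF linB1])
  qed
  then show ?thesis by simp
qed
lemma part_i:
  assumes p2: "2 \<le> p"
    and H: "\<And>Ls Ns. Ls \<in> tuples p \<Longrightarrow> Ns \<in> tuples p \<Longrightarrow> B (nest br E Ls) (nest br F Ns) = ap * Pp Ls Ns"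
    and HQ: "\<And>Ls Ks. Ls \<in> tuples (p - 1) \<Longrightarrow> Ks \<in> tuples (p - 1) \<Longrightarrow> B (nest br E Ls) (nest br F Ks) = \<alpha> * Q Ls Ks"
    and ER: "\<And>Ls. Ls \<in> tuples (p - 1) \<Longrightarrow> nest br E Ls = (\<Sum>Ks\<in>tuples (p - 1). Q Ls Ks *\<^sub>R nest br E Ks)"
    and Ns: "Ns \<in> tuples p"
  shows "br (E M) (nest br F Ns) = ((-1) ^ p * ap / \<alpha>) *\<^sub>R (\<Sum>Ks\<in>tuples (p - 1). Pp (M # Ks) Ns *\<^sub>R nest br F Ks)"
proof -
  obtain N Ks0 where NK: "Ns = N # Ks0" using Ns p2 by (cases Ns) (auto simp: tuples_def)
  have Ks0: "Ks0 \<in> tuples (p - 1)" "Ks0 \<noteq> []" using Ns NK p2 by (auto simp: tuples_def)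
  have tne: "Ks \<in> tuples (p - 1) \<Longrightarrow> Ks \<noteq> []" for Ks using p2 by (auto simp: tuples_def)
  have FG: "Ks \<in> tuples (p - 1) \<Longrightarrow> nest br F Ks \<in> G (int (p - 1))" for Ks
    using nest_F_G[OF tne] by (simp add: tuples_def)
  show ?thesis
  proof (cases "\<alpha> = 0")
    case True
    have z: "nest br F Ks = 0" if Ks: "Ks \<in> tuples (p - 1)" for Ks
    proof (rule zeroE[of "p - 1"])
      show "p - 1 \<noteq> 0" using p2 by simp
      show "nest br F Ks \<in> G (int (p - 1))" by (rule FG[OF Ks])
      fix Ls :: "'m list" assume "Ls \<in> tuples (p - 1)"
      then show "B (nest br E Ls) (nest br F Ks) = 0" using HQ[OF _ Ks] True by simp
    qed
    have "nest br F Ns = 0" using z[OF Ks0(1)] NK by (simp add: nest_Cons[OF Ks0(2)] linear_0[OF lin1])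
    then show ?thesis using True by (simp add: linear_0[OF lin1])
  next
    case False
    define c where "c = (-1) ^ p * ap / \<alpha>"
    let ?L = "br (E M) (nest br F Ns)"
    let ?R = "c *\<^sub>R (\<Sum>Ks\<in>tuples (p - 1). Pp (M # Ks) Ns *\<^sub>R nest br F Ks)"
    have Nsne: "Ns \<noteq> []" using NK by simp
    have LG: "?L \<in> G (int (p - 1))"
    proof -
      have "?L \<in> G (-1 + int (length Ns))" by (rule GR[OF E_G nest_F_G[OF Nsne]])
      moreover have "-1 + int (length Ns) = int (p - 1)" using Ns p2 by (simp add: tuples_def)
      ultimately show ?thesis by simp
    qed
    have RG: "?R \<in> G (int (p - 1))"
      using FG G_sub by (intro subspace_scale subspace_sum) auto
    have "?L - ?R = 0"
    proof (rule zeroE[of "p - 1"])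
      show "p - 1 \<noteq> 0" using p2 by simp
      show "?L - ?R \<in> G (int (p - 1))" using LG RG G_sub by (simp add: subspace_diff)
      fix Ls :: "'m list" assume Ls: "Ls \<in> tuples (p - 1)"
      have Lsne: "Ls \<noteq> []" by (rule tne[OF Ls])
      have lenLs: "length Ls = p - 1" using Ls by (simp add: tuples_def)
      have MLs: "M # Ls \<in> tuples p" using Ls p2 by (simp add: tuples_def)
      have "br (nest br E Ls) (E M) = - (sgn2 (odd (p - 1)) True *\<^sub>R br (E M) (nest br E Ls))"
        using anti[OF nest_E_par[OF Lsne] E_odd[of M]] lenLs by simp
      then have "B (nest br E Ls) ?L = - sgn2 (odd (p - 1)) True * B (nest br E (M # Ls)) (nest br F Ns)"
        by (simp add: invB[symmetric] nest_Cons[OF Lsne] linear_neg[OF linB2] linear_scale[OF linB2])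
      also have "\<dots> = (-1) ^ p * (ap * Pp (M # Ls) Ns)"
        using sgn_p[of "p - 1"] p2 H[OF MLs Ns] by simp
      finally have 1: "B (nest br E Ls) ?L = (-1) ^ p * (ap * Pp (M # Ls) Ns)" .
      have I: "ap * Pp (M # Ls) Ns = (\<Sum>Ks\<in>tuples (p - 1). Q Ls Ks * (ap * Pp (M # Ks) Ns))"
      proof -
        have "ap * Pp (M # Ls) Ns = B (br (E M) (nest br E Ls)) (nest br F Ns)"
          using H[OF MLs Ns] by (simp add: nest_Cons[OF Lsne])
        also have "\<dots> = (\<Sum>Ks\<in>tuples (p - 1). Q Ls Ks * B (br (E M) (nest br E Ks)) (nest br F Ns))"
          by (subst ER[OF Ls]) (simp add: linear_sum[OF lin1] linear_scale[OF lin1]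
              linear_sum[OF linB2] linear_scale[OF linB2])
        also have "\<dots> = (\<Sum>Ks\<in>tuples (p - 1). Q Ls Ks * (ap * Pp (M # Ks) Ns))"
        proof (rule sum.cong[OF refl])
          fix Ks :: "'m list" assume Ks: "Ks \<in> tuples (p - 1)"
          have "M # Ks \<in> tuples p" using Ks p2 by (simp add: tuples_def)
          then show "Q Ls Ks * B (br (E M) (nest br E Ks)) (nest br F Ns) = Q Ls Ks * (ap * Pp (M # Ks) Ns)"
            using H[OF _ Ns] by (simp add: nest_Cons[OF tne[OF Ks], symmetric])
        qed
        finally show ?thesis .
      qed
      have "B (nest br E Ls) ?R = c * (\<Sum>Ks\<in>tuples (p - 1). Pp (M # Ks) Ns * B (nest br E Ls) (nest br F Ks))"
        by (simp add: linear_sum[OF linB1] linear_scale[OF linB1])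
      also have "\<dots> = c * (\<Sum>Ks\<in>tuples (p - 1). Pp (M # Ks) Ns * (\<alpha> * Q Ls Ks))"
        using HQ[OF Ls] by simp
      also have "\<dots> = (-1) ^ p * (\<Sum>Ks\<in>tuples (p - 1). Q Ls Ks * (ap * Pp (M # Ks) Ns))"
        unfolding sum_distrib_left by (rule sum.cong[OF refl]) (simp add: c_def False)
      finally have 2: "B (nest br E Ls) ?R = (-1) ^ p * (ap * Pp (M # Ls) Ns)" using I by simp
      show "B (nest br E Ls) (?L - ?R) = 0" using 1 2 by (simp add: linear_diff[OF linB1])
    qed
    then show ?thesis unfolding c_def by simp
  qed
qed

lemma part_iii:
  assumes p2: "2 \<le> p"
    and H: "\<And>Ls Ns. Ls \<in> tuples p \<Longrightarrow> Ns \<in> tuples p \<Longrightarrow> B (nest br E Ls) (nest br F Ns) = ap * Pp Ls Ns"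
    and Ms: "Ms \<in> tuples p" and Ns: "Ns \<in> tuples p"
  shows "br (nest br E Ms) (nest br F Ns) =
          ap *\<^sub>R (\<Sum>Ks\<in>tuples p. Pp Ms Ks *\<^sub>R
             (\<Sum>i<p. if (\<forall>j<p. j \<noteq> i \<longrightarrow> Ks ! j = Ns ! j)
                      then br (E (Ks ! i)) (F (Ns ! i)) else 0))"
proof -
  have Msne: "Ms \<noteq> []" and Nsne: "Ns \<noteq> []" using Ms Ns p2 by (auto simp: tuples_def)
  have lenN: "length Ns = p" using Ns by (simp add: tuples_def)
  let ?L = "br (nest br E Ms) (nest br F Ns)"
  let ?R = "ap *\<^sub>R (\<Sum>Ks\<in>tuples p. Pp Ms Ks *\<^sub>R
             (\<Sum>i<p. if (\<forall>j<p. j \<noteq> i \<longrightarrow> Ks ! j = Ns ! j)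
                      then br (E (Ks ! i)) (F (Ns ! i)) else 0))"
  have EF0: "br (E K) (F N) \<in> G 0" for K N using GR[OF E_G F_G] by simp
  have LG: "?L \<in> G 0"
  proof -
    have "?L \<in> G (- int (length Ms) + int (length Ns))" by (rule GR[OF nest_E_G[OF Msne] nest_F_G[OF Nsne]])
    then show ?thesis using Ms Ns by (simp add: tuples_def)
  qed
  have RG: "?R \<in> G 0"
    using G_sub EF0 by (intro subspace_scale subspace_sum) (auto simp: subspace_0)
  have "?L - ?R = 0"
  proof (rule zero0)
    show "?L - ?R \<in> G 0" using LG RG G_sub by (simp add: subspace_diff)
    fix u assume u: "u \<in> G 0"
    have uF: "u \<in> V False" using G_par[OF u] by simp
    define c where "c j K = B (E K) (br u (F (Ns ! j)))" for j K
    have BL: "B u ?L = - (\<Sum>j<p. \<Sum>K\<in>UNIV. c j K * (ap * Pp Ms (Ns[j := K])))"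
    proof -
      have LF: "?L \<in> V False" using G_par[OF LG] by simp
      have "B u ?L = B ?L u" using symB[OF uF LF] by (simp add: sgn2_def)
      also have "\<dots> = B (nest br E Ms) (br (nest br F Ns) u)" by (simp add: invB)
      also have "br (nest br F Ns) u = - br u (nest br F Ns)"
        using anti[OF nest_F_par[OF Nsne] uF] by (simp add: sgn2_def)
      also have "B (nest br E Ms) (- br u (nest br F Ns)) =
          - (\<Sum>j<p. \<Sum>K\<in>UNIV. c j K * B (nest br E Ms) (nest br F (Ns[j := K])))"
        unfolding deriv[OF u Nsne] lenN c_def
        by (simp add: linear_neg[OF linB1] linear_sum[OF linB1] linear_scale[OF linB1])
      also have "\<dots> = - (\<Sum>j<p. \<Sum>K\<in>UNIV. c j K * (ap * Pp Ms (Ns[j := K])))"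
      proof -
        have "Ns[j := K] \<in> tuples p" for j K using Ns by (simp add: tuples_def)
        then show ?thesis using H[OF Ms] by simp
      qed
      finally show ?thesis .
    qed
    have Bbr: "B u (br (E K) (F N)) = - B (E K) (br u (F N))" for K N
    proof -
      have gF: "br (E K) (F N) \<in> V False" using G_par[OF EF0] by simp
      have "B u (br (E K) (F N)) = B (br (E K) (F N)) u" using symB[OF uF gF] by (simp add: sgn2_def)
      also have "\<dots> = B (E K) (br (F N) u)" by (simp add: invB)
      also have "br (F N) u = - br u (F N)" using anti[OF F_odd uF] by (simp add: sgn2_def)
      finally show ?thesis by (simp add: linear_neg[OF linB1])
    qed
    have "B u ?R = ap * (\<Sum>Ks\<in>tuples p. Pp Ms Ks *
        (\<Sum>i<p. if (\<forall>j<p. j \<noteq> i \<longrightarrow> Ks ! j = Ns ! j) then B u (br (E (Ks ! i)) (F (Ns ! i))) else 0))"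
    proof -
      have ifB: "B u (if P then x else 0) = (if P then B u x else 0)" for P x
        by (simp add: linear_0[OF linB1])
      show ?thesis by (simp only: linear_sum[OF linB1] linear_scale[OF linB1] ifB real_scaleR_def)
    qed
    also have "\<dots> = - (ap * (\<Sum>i<p. \<Sum>Ks\<in>tuples p.
        (if (\<forall>j<p. j \<noteq> i \<longrightarrow> Ks ! j = Ns ! j) then Pp Ms Ks * c i (Ks ! i) else 0)))"
    proof -
      have "(\<Sum>Ks\<in>tuples p. Pp Ms Ks *
        (\<Sum>i<p. if (\<forall>j<p. j \<noteq> i \<longrightarrow> Ks ! j = Ns ! j) then B u (br (E (Ks ! i)) (F (Ns ! i))) else 0))
        = (\<Sum>Ks\<in>tuples p. \<Sum>i<p. - (if (\<forall>j<p. j \<noteq> i \<longrightarrow> Ks ! j = Ns ! j) then Pp Ms Ks * c i (Ks ! i) else 0))"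
      proof -
        have gen: "Pp Ms Ks * (if C then B u (br (E (Ks ! i)) (F (Ns ! i))) else 0) =
            - (if C then Pp Ms Ks * c i (Ks ! i) else 0)" for C Ks i
          by (simp add: Bbr c_def)
        show ?thesis unfolding sum_distrib_left by (intro sum.cong refl) (rule gen)
      qed
      also have "\<dots> = - (\<Sum>i<p. \<Sum>Ks\<in>tuples p.
          (if (\<forall>j<p. j \<noteq> i \<longrightarrow> Ks ! j = Ns ! j) then Pp Ms Ks * c i (Ks ! i) else 0))"
        by (subst sum.swap) (simp add: sum_negf)
      finally show ?thesis by simp
    qed
    also have "\<dots> = - (ap * (\<Sum>i<p. \<Sum>K\<in>UNIV. Pp Ms (Ns[i := K]) * c i K))"
    proof -
      have "(\<Sum>Ks\<in>tuples p. (if (\<forall>j<p. j \<noteq> i \<longrightarrow> Ks ! j = Ns ! j) then Pp Ms Ks * c i (Ks ! i) else 0))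
          = (\<Sum>K\<in>UNIV. Pp Ms (Ns[i := K]) * c i K)" if i: "i < p" for i
        using sel[OF Ns i, of "\<lambda>Ks. Pp Ms Ks * c i (Ks ! i)"] i lenN by simp
      then show ?thesis by simp
    qed
    finally have BR: "B u ?R = - (ap * (\<Sum>i<p. \<Sum>K\<in>UNIV. Pp Ms (Ns[i := K]) * c i K))" .
    have "B u ?L = B u ?R" unfolding BL BR
      by (simp add: sum_distrib_left mult_ac)
    then show "B u (?L - ?R) = 0" by (simp add: linear_diff[OF linB1])
  qed
  then show ?thesis by simp
qed

end

theorem theorem1:
  fixes n :: nat and V :: "bool \<Rightarrow> 'a::real_vector set" and br :: "'a \<Rightarrow> 'a \<Rightarrow> 'a"
    and e f h :: "nat \<Rightarrow> 'a" and B :: "'a \<Rightarrow> 'a \<Rightarrow> real"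
    and E F :: "'m::finite \<Rightarrow> 'a" and P :: "nat \<Rightarrow> 'm list \<Rightarrow> 'm list \<Rightarrow> real"
    and a :: "nat \<Rightarrow> real" and p :: nat
  assumes "4 \<le> n" and "n \<le> 8"
    and "is_U n V br e f h"
    and "inv_form n V br e f h B"
    and "dual_bases n br e f h B E F"
    and "\<forall>k\<in>{2..p}. is_projector br E F (P k) k"
    and "2 \<le> p"
    and "\<forall>k\<in>{2..p}. \<forall>Ms\<in>tuples k. \<forall>Ns\<in>tuples k.
           B (nest br E Ms) (nest br F Ns) = a k * P k Ms Ns"
    and "a 1 = 1"
  shows
    "(\<forall>M. \<forall>Ns\<in>tuples p.
        br (E M) (nest br F Ns) =
          ((-1) ^ p * a p / a (p - 1)) *\<^sub>R
            (\<Sum>Ks\<in>tuples (p - 1). P p (M # Ks) Ns *\<^sub>R nest br F Ks)) \<and>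
     (\<forall>Ms\<in>tuples (p - 1). \<forall>Ns\<in>tuples p.
        br (nest br E Ms) (nest br F Ns) =
          a p *\<^sub>R (\<Sum>M\<in>UNIV. P p (M # Ms) Ns *\<^sub>R F M)) \<and>
     (\<forall>Ms\<in>tuples p. \<forall>Ns\<in>tuples p.
        br (nest br E Ms) (nest br F Ns) =
          a p *\<^sub>R (\<Sum>Ks\<in>tuples p. P p Ms Ks *\<^sub>R
             (\<Sum>i<p. if (\<forall>j<p. j \<noteq> i \<longrightarrow> Ks ! j = Ns ! j)
                      then br (E (Ks ! i)) (F (Ns ! i)) else 0)))"
proof -
  interpret U: Uset n V br e f h B E F
    by (rule Uset.intro) (fact assms)+
  have p2: "2 \<le> p" by (fact assms(7))
  have H: "\<And>Ls Ns. Ls \<in> tuples p \<Longrightarrow> Ns \<in> tuples p \<Longrightarrow> B (nest br E Ls) (nest br F Ns) = a p * P p Ls Ns"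
    using assms(8) p2 by auto
  have i: "\<forall>M. \<forall>Ns\<in>tuples p.
        br (E M) (nest br F Ns) =
          ((-1) ^ p * a p / a (p - 1)) *\<^sub>R
            (\<Sum>Ks\<in>tuples (p - 1). P p (M # Ks) Ns *\<^sub>R nest br F Ks)"
  proof (intro allI ballI)
    fix M :: 'm and Ns :: "'m list" assume Ns: "Ns \<in> tuples p"
    show "br (E M) (nest br F Ns) =
          ((-1) ^ p * a p / a (p - 1)) *\<^sub>R
            (\<Sum>Ks\<in>tuples (p - 1). P p (M # Ks) Ns *\<^sub>R nest br F Ks)"
    proof (cases "p = 2")
      case True
      define Q :: "'m list \<Rightarrow> 'm list \<Rightarrow> real" where "Q Ls Ks = (if Ls = Ks then 1 else 0)" for Ls Ks
      have HQ: "B (nest br E Ls) (nest br F Ks) = 1 * Q Ls Ks"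
        if LK: "Ls \<in> tuples (p - 1)" "Ks \<in> tuples (p - 1)" for Ls Ks
      proof -
        obtain L K where "Ls = [L]" "Ks = [K]" using LK True
          by (auto simp: tuples_def length_Suc_conv)
        then show ?thesis by (simp add: Q_def U.BEF)
      qed
      have ER: "nest br E Ls = (\<Sum>Ks\<in>tuples (p - 1). Q Ls Ks *\<^sub>R nest br E Ks)"
        if Ls: "Ls \<in> tuples (p - 1)" for Ls
      proof -
        have "(\<Sum>Ks\<in>tuples (p - 1). Q Ls Ks *\<^sub>R nest br E Ks) =
            (\<Sum>Ks\<in>tuples (p - 1). if Ls = Ks then nest br E Ks else 0)"
          by (rule sum.cong) (auto simp: Q_def)
        also have "\<dots> = nest br E Ls" using Ls by (simp add: finite_tuples)
        finally show ?thesis by simp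
      qed
      have "br (E M) (nest br F Ns) =
          ((-1) ^ p * a p / 1) *\<^sub>R (\<Sum>Ks\<in>tuples (p - 1). P p (M # Ks) Ns *\<^sub>R nest br F Ks)"
        by (rule U.part_i[OF p2 H HQ ER Ns])
      moreover have "a (p - 1) = 1" using True assms(9) by simp
      ultimately show ?thesis by simp
    next
      case False
      then have p3: "p - 1 \<in> {2..p}" using p2 by auto
      have HQ: "B (nest br E Ls) (nest br F Ks) = a (p - 1) * P (p - 1) Ls Ks"
        if "Ls \<in> tuples (p - 1)" "Ks \<in> tuples (p - 1)" for Ls Ks
        using assms(8) p3 that by blast
      have ER: "nest br E Ls = (\<Sum>Ks\<in>tuples (p - 1). P (p - 1) Ls Ks *\<^sub>R nest br E Ks)"
        if "Ls \<in> tuples (p - 1)" for Ls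
        using assms(6) p3 that unfolding is_projector_def by blast
      show ?thesis by (rule U.part_i[OF p2 H HQ ER Ns])
    qed
  qed
  have ii: "\<forall>Ms\<in>tuples (p - 1). \<forall>Ns\<in>tuples p.
        br (nest br E Ms) (nest br F Ns) =
          a p *\<^sub>R (\<Sum>M\<in>UNIV. P p (M # Ms) Ns *\<^sub>R F M)"
    using U.part_ii[OF p2 H] by blast
  have iii: "\<forall>Ms\<in>tuples p. \<forall>Ns\<in>tuples p.
        br (nest br E Ms) (nest br F Ns) =
          a p *\<^sub>R (\<Sum>Ks\<in>tuples p. P p Ms Ks *\<^sub>R
             (\<Sum>i<p. if (\<forall>j<p. j \<noteq> i \<longrightarrow> Ks ! j = Ns ! j)
                      then br (E (Ks ! i)) (F (Ns ! i)) else 0))"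
    using U.part_iii[OF p2 H] by blast
  show ?thesis using i ii iii by blast
qed
end
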